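(* Let $(YQ(1)_1)$ be the two-sided ideal of $YQ(1)$ generated by all odd elements and let $\mathbf A$ be the subalgebra of $YQ(1)$ generated by the $T^{(2k)}_{1,1}$, $k>0$. Then the natural map $\mathbf A\to YQ(1)/(YQ(1)_1)$ is an isomorphism, $\mathbf A$ is the polynomial algebra $\mathbb C[T^{(2k)}_{1,1}]_{k>0}$, and the quotient Hopf algebra structure is given by $\Delta T_{1,1}(u^{-2})=T_{1,1}(u^{-2})\otimes T_{1,1}(u^{-2})$, where $T_{1,1}(u^{-2})=\sum_{k\ge0}T^{(2k)}_{1,1}u^{-2k}$ with $T^{(0)}_{1,1}=1$.
   Context: $YQ(1)$ is the associative unital superalgebra over $\mathbb C$ generated by $T_{i,j}^{(m)}$, $m\geq1$, $i,j\in\{1,-1\}$, of parity $p(i)+p(j)$ where $p(1)=0$, $p(-1)=1$. With $T_{i,j}(u)=\delta_{ij}+\sum_{m\ge1}T^{(m)}_{i,j}u^{-m}$, the defining relations are, for all $i,j,k,l$: $(u^2-v^2)[T_{i,j}(u),T_{k,l}(v)](-1)^{p(i)p(k)+p(i)p(l)+p(k)p(l)}=(u+v)(T_{k,j}(u)T_{i,l}(v)-T_{k,j}(v)T_{i,l}(u))-(u-v)(T_{-k,j}(u)T_{-i,l}(v)-T_{k,-j}(v)T_{i,-l}(u))(-1)^{p(k)+p(l)}$ (supercommutators), and $T_{i,j}(-u)=T_{-i,-j}(u)$. It is a Hopf superalgebra with $\Delta(T^{(r)}_{i,j})=\sum_{s=0}^r\sum_k(-1)^{(p(i)+p(k))(p(j)+p(k))}T^{(s)}_{i,k}\otimes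 T^{(r-s)}_{k,j}$, $T^{(0)}_{i,j}=\delta_{ij}$. For a Hopf superalgebra, the ideal generated by the odd elements is a Hopf ideal, so the quotient is a Hopf algebra. *)

theory Defs
  imports Complex_Main "HOL-Library.Poly_Mapping"
begin

datatype idx = Pos | Neg   (* Pos = 1, Neg = -1 *)

fun negi :: "idx \<Rightarrow> idx" where
  "negi Pos = Neg" | "negi Neg = Pos"

fun par :: "idx \<Rightarrow> nat" where
  "par Pos = 0" | "par Neg = 1"

text \<open>A letter (k,i,j) stands for the generator T^(k+1)_ij.\<close>
type_synonym letter = "nat \<times> idx \<times> idx"

datatype word = Word "letter list"

fun word_list :: "word \<Rightarrow> letter list" where "word_list (Word xs) = xs"

instantiation word :: monoid_add
begin
definition zero_word :: word where "zero_word = Word []"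
definition plus_word :: "word \<Rightarrow> word \<Rightarrow> word" where
  "plus_word v w = Word (word_list v @ word_list w)"
instance
proof
  fix a b c :: word
  show "a + b + c = a + (b + c)" by (cases a; cases b; cases c) (simp add: plus_word_def)
  show "0 + a = a" by (cases a) (simp add: plus_word_def zero_word_def)
  show "a + 0 = a" by (cases a) (simp add: plus_word_def zero_word_def)
qed
end

text \<open>The free algebra C<T^(m)_ij> : finitely supported functions on words.\<close>
type_synonym FA = "word \<Rightarrow>\<^sub>0 complex"

definition scal :: "complex \<Rightarrow> FA" where
  "scal c = Poly_Mapping.single 0 c"

definition T :: "nat \<Rightarrow> idx \<Rightarrow> idx \<Rightarrow> FA" where
  "T m i j = (if m = 0 then (if i = j then 1 else 0)
              else Poly_Mapping.single (Word [(m - 1, i, j)]) 1)"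

text \<open>Integer-indexed version, T^(a) = 0 for a < 0 (coefficients of positive powers of u).\<close>
definition Tz :: "int \<Rightarrow> idx \<Rightarrow> idx \<Rightarrow> FA" where
  "Tz a i j = (if a < 0 then 0 else T (nat a) i j)"

definition scomm :: "FA \<Rightarrow> nat \<Rightarrow> FA \<Rightarrow> nat \<Rightarrow> FA" where
  "scomm x px y py = x * y - (-1) ^ (px * py) * y * x"

text \<open>Coefficient of u^(-r) v^(-s) (r, s integers) in the defining relation
 (u^2-v^2)[T_ij(u),T_kl(v)] (-1)^(p(i)p(k)+p(i)p(l)+p(k)p(l))
   = (u+v)(T_kj(u)T_il(v) - T_kj(v)T_il(u))
     - (u-v)(T_{-k,j}(u)T_{-i,l}(v) - T_{k,-j}(v)T_{i,-l}(u)) (-1)^(p(k)+p(l)),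
 written as LHS - RHS.\<close>
definition rel1 :: "idx \<Rightarrow> idx \<Rightarrow> idx \<Rightarrow> idx \<Rightarrow> int \<Rightarrow> int \<Rightarrow> FA" where
  "rel1 i j k l r s =
     (-1) ^ (par i * par k + par i * par l + par k * par l) *
       (scomm (Tz (r + 2) i j) (par i + par j) (Tz s k l) (par k + par l)
        - scomm (Tz r i j) (par i + par j) (Tz (s + 2) k l) (par k + par l))
     - ( (Tz (r + 1) k j * Tz s i l + Tz r k j * Tz (s + 1) i l)
        - (Tz s k j * Tz (r + 1) i l + Tz (s + 1) k j * Tz r i l) )
     + (-1) ^ (par k + par l) *
       ( (Tz (r + 1) (negi k) j * Tz s (negi i) l - Tz r (negi k) j * Tz (s + 1) (negi i) l)
        - (Tz s k (negi j) * Tz (r + 1) i (negi l) - Tz (s + 1) k (negi j) * Tz r i (negi l)) )"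

text \<open>Coefficient of u^(-m) in T_ij(-u) = T_{-i,-j}(u).\<close>
definition rel2 :: "nat \<Rightarrow> idx \<Rightarrow> idx \<Rightarrow> FA" where
  "rel2 m i j = (-1) ^ m * T m i j - T m (negi i) (negi j)"

definition YQ_rels :: "FA set" where
  "YQ_rels = {rel1 i j k l r s | i j k l r s. True} \<union> {rel2 m i j | m i j. True}"

inductive_set ideal_gen :: "FA set \<Rightarrow> FA set" for S where
  gen: "x \<in> S \<Longrightarrow> x \<in> ideal_gen S"
| zero: "0 \<in> ideal_gen S"
| add: "x \<in> ideal_gen S \<Longrightarrow> y \<in> ideal_gen S \<Longrightarrow> x + y \<in> ideal_gen S"
| mult: "x \<in> ideal_gen S \<Longrightarrow> a * x * b \<in> ideal_gen S"

inductive_set subalg_gen :: "FA set \<Rightarrow> FA set" for G where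
  gen: "x \<in> G \<Longrightarrow> x \<in> subalg_gen G"
| scal: "scal c \<in> subalg_gen G"
| add: "x \<in> subalg_gen G \<Longrightarrow> y \<in> subalg_gen G \<Longrightarrow> x + y \<in> subalg_gen G"
| mult: "x \<in> subalg_gen G \<Longrightarrow> y \<in> subalg_gen G \<Longrightarrow> x * y \<in> subalg_gen G"

text \<open>YQ(1) = FA / J_R. Elements of FA represent elements of YQ(1); x, y
  represent the same element iff x - y \<in> J_R.\<close>
definition J_R :: "FA set" where "J_R = ideal_gen YQ_rels"

text \<open>The relations are homogeneous, so the grading descends to YQ(1), and the odd
  elements of YQ(1) are exactly the images of odd homogeneous elements of FA.\<close>
definition word_par :: "word \<Rightarrow> nat" where
  "word_par w = (\<Sum>(k, i, j) \<leftarrow> word_list w. par i + par j)"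

definition odd_FA :: "FA \<Rightarrow> bool" where
  "odd_FA x \<longleftrightarrow> (\<forall>w \<in> Poly_Mapping.keys x. odd (word_par w))"

text \<open>Preimage in FA of the two-sided ideal (YQ(1)_1) of YQ(1) generated by the odd elements.\<close>
definition J_odd :: "FA set" where "J_odd = ideal_gen (YQ_rels \<union> {x. odd_FA x})"

text \<open>Preimage in FA of the subalgebra A generated by the T^(2k)_11, k > 0.\<close>
definition A_FA :: "FA set" where
  "A_FA = subalg_gen {T (2 * k) Pos Pos | k. k > 0}"

text \<open>C[x_0,x_1,...] as finitely supported functions on monomials (finitely supported nat to nat);
  x_k is sent to T^(2(k+1))_11.\<close>
type_synonym cpoly = "(nat \<Rightarrow>\<^sub>0 nat) \<Rightarrow>\<^sub>0 complex"

definition eval_mono :: "(nat \<Rightarrow>\<^sub>0 nat) \<Rightarrow> FA" where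
  "eval_mono m = foldr (\<lambda>k acc. T (2 * (k + 1)) Pos Pos ^ Poly_Mapping.lookup m k * acc)
                        (sorted_list_of_set (Poly_Mapping.keys m)) 1"

definition eval_poly :: "cpoly \<Rightarrow> FA" where
  "eval_poly p = (\<Sum>m \<in> Poly_Mapping.keys p. scal (Poly_Mapping.lookup p m) * eval_mono m)"

type_synonym FA2 = "(word \<times> word) \<Rightarrow>\<^sub>0 complex"

definition tens :: "FA \<Rightarrow> FA \<Rightarrow> FA2" where
  "tens x y = (\<Sum>v \<in> Poly_Mapping.keys x. \<Sum>w \<in> Poly_Mapping.keys y.
                  Poly_Mapping.single (v, w) (Poly_Mapping.lookup x v * Poly_Mapping.lookup y w))"

definition Delta_T :: "nat \<Rightarrow> idx \<Rightarrow> idx \<Rightarrow> FA2" where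
  "Delta_T r i j = (\<Sum>s \<in> {0..r}. \<Sum>k \<in> {Pos, Neg}.
      tens ((-1) ^ ((par i + par k) * (par j + par k)) * T s i k) (T (r - s) k j))"

text \<open>Kernel of FA (x) FA -> Q (x) Q where Q = FA / J_odd = YQ(1)/(YQ(1)_1), i.e.
  J_odd (x) FA + FA (x) J_odd (scalars are absorbed since J_odd is an ideal).\<close>
inductive_set J2 :: "FA2 set" where
  zero: "0 \<in> J2"
| left: "x \<in> J_odd \<Longrightarrow> tens x y \<in> J2"
| right: "y \<in> J_odd \<Longrightarrow> tens x y \<in> J2"
| add: "a \<in> J2 \<Longrightarrow> b \<in> J2 \<Longrightarrow> a + b \<in> J2"

end

theory Submission
  imports Defs
begin


abbreviation lk where "lk \<equiv> Poly_Mapping.lookup"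

lemma ig_lmult: "x \<in> ideal_gen S \<Longrightarrow> a * x \<in> ideal_gen S"
  using ideal_gen.mult[of x S a 1] by simp
lemma ig_rmult: "x \<in> ideal_gen S \<Longrightarrow> x * b \<in> ideal_gen S"
  using ideal_gen.mult[of x S 1 b] by simp
lemma ig_uminus: "x \<in> ideal_gen S \<Longrightarrow> - x \<in> ideal_gen S"
  using ig_lmult[of x S "-1"] by simp
lemma ig_diff: "x \<in> ideal_gen S \<Longrightarrow> y \<in> ideal_gen S \<Longrightarrow> x - y \<in> ideal_gen S"
  using ideal_gen.add[of x S "-y"] ig_uminus[of y S] by simp
lemma ig_sum: "(\<And>i. i \<in> A \<Longrightarrow> f i \<in> ideal_gen S) \<Longrightarrow> sum f A \<in> ideal_gen S"
proof (induction A rule: infinite_finite_induct)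
  case (infinite A) then show ?case by (simp add: ideal_gen.zero)
next
  case empty then show ?case by (simp add: ideal_gen.zero)
next
  case (insert x F) then show ?case by (simp add: ideal_gen.add)
qed
lemma ig_mono: "x \<in> ideal_gen S \<Longrightarrow> S \<subseteq> S' \<Longrightarrow> x \<in> ideal_gen S'"
  by (induction rule: ideal_gen.induct) (auto intro: ideal_gen.intros)

lemma scal_mult_single: "scal c * Poly_Mapping.single w d = Poly_Mapping.single w (c * d)"
  by (simp add: scal_def mult_single)
lemma single_mult_scal: "Poly_Mapping.single w d * scal c = Poly_Mapping.single w (c * d)"
  by (simp add: scal_def mult_single mult.commute)

lemma two_FA: "scal (1/2) * (2::FA) = 1"
proof -
  have "(2::FA) = Poly_Mapping.single 0 2" by simp
  then show ?thesis using scal_mult_single[of "1/2" 0 2] by simp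
qed

lemma ig_half: "2 * x \<in> ideal_gen S \<Longrightarrow> (x::FA) \<in> ideal_gen S"
  using ig_lmult[of "2*x" S "scal (1/2)"] two_FA by (simp add: mult.assoc[symmetric])

lemma pm_sum_single: "(x::'a \<Rightarrow>\<^sub>0 'b::comm_monoid_add) = (\<Sum>w\<in>Poly_Mapping.keys x. Poly_Mapping.single w (lk x w))"
proof (rule poly_mapping_eqI)
  fix k
  show "lk x k = lk (\<Sum>w\<in>Poly_Mapping.keys x. Poly_Mapping.single w (lk x w)) k"
    by (simp add: lookup_sum lookup_single when_def in_keys_iff)
qed

section \<open>The homomorphism to commutative polynomials\<close>

definition Gm :: "nat \<Rightarrow> cpoly" where
  "Gm m = (if m = 0 then 1 else if even m then Poly_Mapping.single (Poly_Mapping.single (m div 2 - 1) 1) 1 else 0)"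

fun philet :: "letter \<Rightarrow> cpoly" where
  "philet (k, i, j) = (if i = j then Gm (Suc k) else 0)"

definition psiw :: "word \<Rightarrow> cpoly" where
  "psiw w = prod_list (map philet (word_list w))"

definition phiH :: "FA \<Rightarrow> cpoly" where
  "phiH x = (\<Sum>w\<in>Poly_Mapping.keys x. Poly_Mapping.single 0 (lk x w) * psiw w)"

lemma psiw_plus: "psiw (v + w) = psiw v * psiw w"
  by (cases v; cases w) (simp add: psiw_def plus_word_def)

lemma psiw_zero: "psiw 0 = 1"
  by (simp add: psiw_def zero_word_def)

lemma phiH_superset:
  assumes "finite K" "Poly_Mapping.keys x \<subseteq> K"
  shows "phiH x = (\<Sum>w\<in>K. Poly_Mapping.single 0 (lk x w) * psiw w)"
  unfolding phiH_def
  by (rule sum.mono_neutral_left) (use assms in \<open>auto simp: in_keys_iff\<close>)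

lemma phiH_add: "phiH (x + y) = phiH x + phiH y"
proof -
  let ?K = "Poly_Mapping.keys x \<union> Poly_Mapping.keys y"
  have k: "Poly_Mapping.keys (x+y) \<subseteq> ?K" by (rule keys_add)
  show ?thesis
    by (simp add: phiH_superset[OF _ k] phiH_superset[of ?K x] phiH_superset[of ?K y]
        lookup_add single_add distrib_right sum.distrib)
qed

lemma phiH_zero: "phiH 0 = 0" by (simp add: phiH_def)

lemma phiH_uminus: "phiH (- x) = - phiH x"
  using phiH_add[of x "-x"] by (simp add: phiH_zero) (metis add.commute eq_neg_iff_add_eq_0)

lemma phiH_diff: "phiH (x - y) = phiH x - phiH y"
  using phiH_add[of x "-y"] phiH_uminus[of y] by simp

lemma phiH_sum: "phiH (sum f A) = (\<Sum>a\<in>A. phiH (f a))"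
  by (induction A rule: infinite_finite_induct) (auto simp: phiH_zero phiH_add)

lemma phiH_single: "phiH (Poly_Mapping.single w c) = Poly_Mapping.single 0 c * psiw w"
  by (simp add: phiH_superset[of "{w}"])

lemma single0_mult: "Poly_Mapping.single 0 (a * b) = (Poly_Mapping.single 0 a * Poly_Mapping.single 0 b :: cpoly)"
  by (simp add: mult_single)

lemma phiH_mult: "phiH (x * y) = phiH x * phiH y"
proof -
  have "x * y = (\<Sum>v\<in>Poly_Mapping.keys x. Poly_Mapping.single v (lk x v)) *
                (\<Sum>w\<in>Poly_Mapping.keys y. Poly_Mapping.single w (lk y w))"
    using pm_sum_single[of x] pm_sum_single[of y] by simp
  also have "\<dots> = (\<Sum>v\<in>Poly_Mapping.keys x. \<Sum>w\<in>Poly_Mapping.keys y.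
       Poly_Mapping.single (v + w) (lk x v * lk y w))"
    by (simp add: sum_distrib_left sum_distrib_right mult_single) (rule sum.swap)
  finally have "phiH (x * y) = (\<Sum>v\<in>Poly_Mapping.keys x. \<Sum>w\<in>Poly_Mapping.keys y.
       phiH (Poly_Mapping.single (v + w) (lk x v * lk y w)))"
    by (simp only: phiH_sum)
  also have "\<dots> = (\<Sum>v\<in>Poly_Mapping.keys x. \<Sum>w\<in>Poly_Mapping.keys y.
       Poly_Mapping.single 0 (lk x v) * psiw v * (Poly_Mapping.single 0 (lk y w) * psiw w))"
    by (intro sum.cong refl) (simp add: phiH_single psiw_plus single0_mult mult_ac)
  also have "\<dots> = phiH x * phiH y"
    by (simp add: phiH_def sum_product)
  finally show ?thesis .
qed

lemma phiH_one: "phiH 1 = 1"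
proof -
  have "(1::FA) = Poly_Mapping.single 0 1" by simp
  then show ?thesis using phiH_single[of 0 1] by (simp add: psiw_zero)
qed

lemma phiH_scal: "phiH (scal c) = Poly_Mapping.single 0 c"
  by (simp add: scal_def phiH_single psiw_zero)

lemma phiH_power: "phiH (x ^ n) = phiH x ^ n"
  by (induction n) (simp_all add: phiH_one phiH_mult)

lemma phiH_numeral: "phiH (numeral n) = numeral n"
  using phiH_scal[of "numeral n"] by (simp add: scal_def)

lemma phiH_T: "phiH (T m i j) = (if i = j then Gm m else 0)"
  by (cases m) (auto simp: T_def phiH_one phiH_zero phiH_single psiw_def Gm_def)


definition Gz :: "int \<Rightarrow> cpoly" where "Gz a = (if a < 0 then 0 else Gm (nat a))"

lemma phiH_Tz: "phiH (Tz a i j) = (if i = j then Gz a else 0)"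
  by (simp add: Tz_def Gz_def phiH_T phiH_zero)

lemma phiH_m1: "phiH (-1) = -1" by (simp add: phiH_uminus phiH_one)

lemma phiH_rel1: "phiH (rel1 i j k l r s) = 0"
  by (cases i; cases j; cases k; cases l)
     (simp_all add: rel1_def scomm_def phiH_add phiH_diff phiH_mult phiH_power phiH_m1 phiH_Tz
        algebra_simps)

lemma Gm_odd: "odd m \<Longrightarrow> Gm m = 0" using odd_pos[of m] by (auto simp: Gm_def)

lemma phiH_rel2: "phiH (rel2 m i j) = 0"
proof -
  have "negi i = negi j \<longleftrightarrow> i = j" by (cases i; cases j) auto
  then show ?thesis
    by (cases "even m") (auto simp: rel2_def phiH_diff phiH_uminus phiH_mult phiH_power phiH_m1 phiH_T Gm_odd)
qed

lemma prod_philet_odd: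
  "odd (sum_list (map (\<lambda>(k, i, j). par i + par j) ls)) \<Longrightarrow> prod_list (map philet ls) = 0"
proof (induction ls)
  case Nil then show ?case by simp
next
  case (Cons a ls)
  obtain k i j where a: "a = (k, i, j)" by (cases a) auto
  show ?case
  proof (cases "i = j")
    case True
    then have "odd (sum_list (map (\<lambda>(k, i, j). par i + par j) ls))" using Cons.prems a by simp
    then show ?thesis using Cons.IH by simp
  next
    case False then show ?thesis using a by simp
  qed
qed

lemma phiH_odd: "odd_FA x \<Longrightarrow> phiH x = 0"
  unfolding phiH_def odd_FA_def
proof (rule sum.neutral, intro ballI)
  fix w assume "\<forall>w\<in>Poly_Mapping.keys x. odd (word_par w)" "w \<in> Poly_Mapping.keys x"
  then have "odd (word_par w)" by blast
  then have "psiw w = 0"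
    by (cases w) (simp add: word_par_def psiw_def prod_philet_odd)
  then show "Poly_Mapping.single 0 (lk x w) * psiw w = 0" by simp
qed

lemma phiH_ideal: "x \<in> ideal_gen S \<Longrightarrow> (\<And>s. s \<in> S \<Longrightarrow> phiH s = 0) \<Longrightarrow> phiH x = 0"
  by (induction rule: ideal_gen.induct) (auto simp: phiH_zero phiH_add phiH_mult)

lemma phiH_J_odd: "x \<in> J_odd \<Longrightarrow> phiH x = 0"
  unfolding J_odd_def
  by (erule phiH_ideal) (auto simp: YQ_rels_def phiH_rel1 phiH_rel2 phiH_odd)

lemma J_R_sub: "x \<in> J_R \<Longrightarrow> x \<in> J_odd"
  unfolding J_R_def J_odd_def by (erule ig_mono) auto


lemma single_pow: "(Poly_Mapping.single (Poly_Mapping.single k 1) 1 :: cpoly) ^ n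
    = Poly_Mapping.single (Poly_Mapping.single k n) 1"
proof (induction n)
  case 0 then show ?case by simp
next
  case (Suc n)
  then show ?case by (simp add: mult_single single_add[symmetric])
qed

lemma phiH_foldr: "phiH (foldr (\<lambda>k acc. f k * acc) L 1) = foldr (\<lambda>k acc. phiH (f k) * acc) L 1"
  by (induction L) (simp_all add: phiH_one phiH_mult)

lemma foldr_singles: "distinct L \<Longrightarrow>
  foldr (\<lambda>k acc. Poly_Mapping.single (Poly_Mapping.single k (e k)) 1 * acc) L (1::cpoly)
   = Poly_Mapping.single (\<Sum>k\<in>set L. Poly_Mapping.single k (e k)) 1"
  by (induction L) (simp_all add: mult_single)

lemma phiH_tt: "phiH (T (2 * (k + 1)) Pos Pos) = Poly_Mapping.single (Poly_Mapping.single k 1) 1"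
  by (simp add: phiH_T Gm_def)

lemma phiH_tt': "phiH (T (Suc (Suc (2 * k))) Pos Pos) = Poly_Mapping.single (Poly_Mapping.single k 1) 1"
  using phiH_tt[of k] by simp

lemma phiH_eval_mono: "phiH (eval_mono m) = Poly_Mapping.single m 1"
proof -
  have "phiH (eval_mono m) = foldr (\<lambda>k acc. Poly_Mapping.single (Poly_Mapping.single k (lk m k)) 1 * acc)
          (sorted_list_of_set (Poly_Mapping.keys m)) 1"
    by (simp only: eval_mono_def phiH_foldr phiH_power phiH_tt single_pow)
  also have "\<dots> = Poly_Mapping.single (\<Sum>k\<in>Poly_Mapping.keys m. Poly_Mapping.single k (lk m k)) 1"
    by (simp add: foldr_singles)
  also have "\<dots> = Poly_Mapping.single m 1"
    using pm_sum_single[of m] by simp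
  finally show ?thesis .
qed

lemma phiH_eval_poly: "phiH (eval_poly p) = p"
proof -
  have "phiH (eval_poly p) = (\<Sum>m\<in>Poly_Mapping.keys p. Poly_Mapping.single m (lk p m))"
    by (simp add: eval_poly_def phiH_sum phiH_mult phiH_scal phiH_eval_mono mult_single)
  also have "\<dots> = p" using pm_sum_single[of p] by simp
  finally show ?thesis .
qed

theorem claim5: "eval_poly p \<in> J_R \<Longrightarrow> p = 0"
  using phiH_J_odd[OF J_R_sub, of "eval_poly p"] phiH_eval_poly[of p] by simp




abbreviation tP where "tP m \<equiv> T m Pos Pos"
abbreviation bP where "bP m \<equiv> T m Pos Neg"
abbreviation cP where "cP m \<equiv> T m Neg Pos"

lemma rel1_PPPP: "rel1 Pos Pos Pos Pos (int r) (int s) =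
   (tP (r+2) * tP s - tP s * tP (r+2)) - (tP r * tP (s+2) - tP (s+2) * tP r)
   - ((tP (r+1) * tP s + tP r * tP (s+1)) - (tP s * tP (r+1) + tP (s+1) * tP r))
   + ((cP (r+1) * cP s - cP r * cP (s+1)) - (bP s * bP (r+1) - bP (s+1) * bP r))"
  by (simp add: rel1_def scomm_def Tz_def nat_add_distrib)

lemma rel1_in: "rel1 i j k l r s \<in> J_R"
  unfolding J_R_def by (rule ideal_gen.gen) (unfold YQ_rels_def, blast)
lemma rel2_in: "rel2 m i j \<in> J_R"
  unfolding J_R_def by (rule ideal_gen.gen) (unfold YQ_rels_def, blast)

lemma c_even: "even m \<Longrightarrow> cP m - bP m \<in> J_R"
  using ig_uminus[OF rel2_in[of m Pos Neg, unfolded J_R_def]] by (simp add: rel2_def J_R_def)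
lemma c_odd: "odd m \<Longrightarrow> cP m + bP m \<in> J_R"
  using ig_uminus[OF rel2_in[of m Pos Neg, unfolded J_R_def]] by (simp add: rel2_def J_R_def)

lemma ig_add2: "x \<in> ideal_gen S \<Longrightarrow> y \<in> ideal_gen S \<Longrightarrow> x + y \<in> ideal_gen S"
  by (rule ideal_gen.add)

lemma Qsum_J:
  fixes c1 c2 c3 c4 b1 b2 b3 b4 :: FA
  assumes "c1 + b1 \<in> ideal_gen S" "c2 - b2 \<in> ideal_gen S" "c3 - b3 \<in> ideal_gen S" "c4 + b4 \<in> ideal_gen S"
  shows "(c1*c2 - c3*c4 - (b2*b1 - b4*b3)) + (c4*c3 - c2*c1 - (b3*b4 - b1*b2)) \<in> ideal_gen S"
proof -
  define r1 where "r1 = c1 + b1"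
  define r2 where "r2 = c2 - b2"
  define r3 where "r3 = c3 - b3"
  define r4 where "r4 = c4 + b4"
  have e: "c1 = r1 - b1" "c2 = r2 + b2" "c3 = r3 + b3" "c4 = r4 - b4"
    by (simp_all add: r1_def r2_def r3_def r4_def)
  have "(c1*c2 - c3*c4 - (b2*b1 - b4*b3)) + (c4*c3 - c2*c1 - (b3*b4 - b1*b2)) =
     r1*(r2+b2) - b1*r2 - r3*(r4 - b4) - b3*r4 + r4*(r3+b3) - b4*r3 - r2*(r1 - b1) - b2*r1"
    unfolding e by (simp add: algebra_simps)
  also have "\<dots> \<in> ideal_gen S"
    using assms unfolding r1_def[symmetric] r2_def[symmetric] r3_def[symmetric] r4_def[symmetric]
    by (intro ig_diff ig_add2 ig_lmult ig_rmult) 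
  finally show ?thesis .
qed

lemma ig_double: "x + x \<in> ideal_gen S \<Longrightarrow> (x::FA) \<in> ideal_gen S"
  using ig_half[of x S] by (simp add: mult_2)

lemma comm_step: "(tP (2*a+2) * tP (2*b) - tP (2*b) * tP (2*a+2))
                   - (tP (2*a) * tP (2*b+2) - tP (2*b+2) * tP (2*a)) \<in> J_R"
proof -
  let ?X = "(tP (2*a+2) * tP (2*b) - tP (2*b) * tP (2*a+2))
                   - (tP (2*a) * tP (2*b+2) - tP (2*b+2) * tP (2*a))"
  let ?Q = "((cP (2*a+1) * cP (2*b) - cP (2*a) * cP (2*b+1)) - (bP (2*b) * bP (2*a+1) - bP (2*b+1) * bP (2*a)))
          + ((cP (2*b+1) * cP (2*a) - cP (2*b) * cP (2*a+1)) - (bP (2*a) * bP (2*b+1) - bP (2*a+1) * bP (2*b)))"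
  have id: "rel1 Pos Pos Pos Pos (int (2*a)) (int (2*b)) + rel1 Pos Pos Pos Pos (int (2*b)) (int (2*a))
      = (?X + ?X) + ?Q"
    unfolding rel1_PPPP by (simp add: algebra_simps)
  have Q: "?Q \<in> J_R"
    unfolding J_R_def
    by (rule Qsum_J) (use c_even c_odd in \<open>auto simp: J_R_def\<close>)
  have "?X + ?X = (rel1 Pos Pos Pos Pos (int (2*a)) (int (2*b)) + rel1 Pos Pos Pos Pos (int (2*b)) (int (2*a))) - ?Q"
    using id by simp
  also have "\<dots> \<in> J_R"
  proof -
    have "rel1 Pos Pos Pos Pos (int (2*a)) (int (2*b)) + rel1 Pos Pos Pos Pos (int (2*b)) (int (2*a)) \<in> J_R"
      unfolding J_R_def by (intro ig_add2 rel1_in[unfolded J_R_def])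
    then show ?thesis using Q unfolding J_R_def by (rule ig_diff)
  qed
  finally show ?thesis unfolding J_R_def by (rule ig_double)
qed

lemma comm_even: "tP (2*a) * tP (2*b) - tP (2*b) * tP (2*a) \<in> J_R"
proof (induction a arbitrary: b)
  case 0 then show ?case by (simp add: T_def J_R_def ideal_gen.zero)
next
  case (Suc a)
  have "tP (2*Suc a) * tP (2*b) - tP (2*b) * tP (2*Suc a) =
        ((tP (2*a+2) * tP (2*b) - tP (2*b) * tP (2*a+2))
                   - (tP (2*a) * tP (2*b+2) - tP (2*b+2) * tP (2*a)))
        + (tP (2*a) * tP (2*(b+1)) - tP (2*(b+1)) * tP (2*a))" by simp
  also have "\<dots> \<in> J_R" using comm_step[of a b] Suc.IH[of "b+1"] unfolding J_R_def by (rule ig_add2)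
  finally show ?case .
qed




lemma scal_central: "scal c * x = x * scal c"
proof -
  have "scal c * x = (\<Sum>w\<in>Poly_Mapping.keys x. scal c * Poly_Mapping.single w (lk x w))"
    by (subst pm_sum_single[of x]) (simp add: sum_distrib_left)
  also have "\<dots> = (\<Sum>w\<in>Poly_Mapping.keys x. Poly_Mapping.single w (lk x w) * scal c)"
    by (simp add: scal_mult_single single_mult_scal)
  also have "\<dots> = x * scal c"
    by (subst (2) pm_sum_single[of x]) (simp add: sum_distrib_right)
  finally show ?thesis .
qed

lemma scal_mult: "scal a * scal b = scal (a * b)"
  by (simp add: scal_def mult_single)

lemma scal_zero: "scal 0 = 0" by (simp add: scal_def)
lemma scal_one: "scal 1 = 1" by (simp add: scal_def)
lemma scal_add: "scal (a + b) = scal a + scal b" by (simp add: scal_def single_add)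

definition commJ :: "FA \<Rightarrow> FA \<Rightarrow> bool" where "commJ x y \<longleftrightarrow> x * y - y * x \<in> J_R"

lemma JR_add: "x \<in> J_R \<Longrightarrow> y \<in> J_R \<Longrightarrow> x + y \<in> J_R" unfolding J_R_def by (rule ideal_gen.add)
lemma JR_diff: "x \<in> J_R \<Longrightarrow> y \<in> J_R \<Longrightarrow> x - y \<in> J_R" unfolding J_R_def by (rule ig_diff)
lemma JR_uminus: "x \<in> J_R \<Longrightarrow> - x \<in> J_R" unfolding J_R_def by (rule ig_uminus)
lemma JR_lmult: "x \<in> J_R \<Longrightarrow> a * x \<in> J_R" unfolding J_R_def by (rule ig_lmult)
lemma JR_rmult: "x \<in> J_R \<Longrightarrow> x * a \<in> J_R" unfolding J_R_def by (rule ig_rmult)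
lemma JR_zero: "0 \<in> J_R" unfolding J_R_def by (rule ideal_gen.zero)
lemma JR_sum: "(\<And>i. i \<in> A \<Longrightarrow> f i \<in> J_R) \<Longrightarrow> sum f A \<in> J_R" unfolding J_R_def by (rule ig_sum)

lemma commJ_sym: "commJ x y \<Longrightarrow> commJ y x"
proof -
  assume "commJ x y"
  then have "- (x * y - y * x) \<in> J_R" unfolding commJ_def by (rule JR_uminus)
  moreover have "- (x * y - y * x) = y * x - x * y" by simp
  ultimately show ?thesis unfolding commJ_def by simp
qed
lemma commJ_scal: "commJ x (scal c)"
  unfolding commJ_def by (simp add: scal_central JR_zero)
lemma commJ_add: "commJ x y1 \<Longrightarrow> commJ x y2 \<Longrightarrow> commJ x (y1 + y2)"
proof -
  assume a: "commJ x y1" "commJ x y2"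
  have "x * (y1 + y2) - (y1 + y2) * x = (x * y1 - y1 * x) + (x * y2 - y2 * x)"
    by (simp add: algebra_simps)
  then show ?thesis using JR_add[OF a[unfolded commJ_def]] unfolding commJ_def by simp
qed
lemma commJ_mult: "commJ x y1 \<Longrightarrow> commJ x y2 \<Longrightarrow> commJ x (y1 * y2)"
proof -
  assume a: "commJ x y1" "commJ x y2"
  have "x * (y1 * y2) - y1 * y2 * x = (x * y1 - y1 * x) * y2 + y1 * (x * y2 - y2 * x)"
    by (simp add: algebra_simps)
  then show ?thesis using JR_add[OF JR_rmult[OF a(1)[unfolded commJ_def]] JR_lmult[OF a(2)[unfolded commJ_def]]]
    unfolding commJ_def by simp
qed

lemma commJ_gen_A: "y \<in> A_FA \<Longrightarrow> g \<in> {T (2 * k) Pos Pos | k. k > 0} \<Longrightarrow> commJ g y"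
  unfolding A_FA_def
proof (induction y rule: subalg_gen.induct)
  case (gen x)
  from gen.hyps obtain k where k: "x = T (2 * k) Pos Pos" by blast
  from gen.prems obtain l where l: "g = T (2 * l) Pos Pos" by blast
  show ?case unfolding commJ_def k l by (rule comm_even)
next
  case (scal c) show ?case by (rule commJ_scal)
next
  case (add x y)
  have "commJ g x" "commJ g y" using add.IH add.prems by auto
  then show ?case by (rule commJ_add)
next
  case (mult x y)
  have "commJ g x" "commJ g y" using mult.IH mult.prems by auto
  then show ?case by (rule commJ_mult)
qed

lemma commJ_A: "x \<in> A_FA \<Longrightarrow> y \<in> A_FA \<Longrightarrow> commJ x y"
  unfolding A_FA_def
proof (induction x rule: subalg_gen.induct)
  case (gen x)
  show ?case by (rule commJ_gen_A[unfolded A_FA_def, OF gen.prems gen.hyps])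
next
  case (scal c) show ?case by (rule commJ_sym[OF commJ_scal])
next
  case (add x1 x2)
  have h: "commJ x1 y" "commJ x2 y" using add.IH add.prems by auto
  show ?case by (rule commJ_sym[OF commJ_add[OF commJ_sym[OF h(1)] commJ_sym[OF h(2)]]])
next
  case (mult x1 x2)
  have h: "commJ x1 y" "commJ x2 y" using mult.IH mult.prems by auto
  show ?case by (rule commJ_sym[OF commJ_mult[OF commJ_sym[OF h(1)] commJ_sym[OF h(2)]]])
qed

lemma A_gen: "k > 0 \<Longrightarrow> T (2 * k) Pos Pos \<in> A_FA"
  unfolding A_FA_def by (rule subalg_gen.gen) blast
lemma A_scal: "scal c \<in> A_FA" unfolding A_FA_def by (rule subalg_gen.scal)
lemma A_one: "1 \<in> A_FA" using A_scal[of 1] by (simp add: scal_one)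
lemma A_zero: "0 \<in> A_FA" using A_scal[of 0] by (simp add: scal_zero)
lemma A_add: "x \<in> A_FA \<Longrightarrow> y \<in> A_FA \<Longrightarrow> x + y \<in> A_FA" unfolding A_FA_def by (rule subalg_gen.add)
lemma A_mult: "x \<in> A_FA \<Longrightarrow> y \<in> A_FA \<Longrightarrow> x * y \<in> A_FA" unfolding A_FA_def by (rule subalg_gen.mult)
lemma A_power: "x \<in> A_FA \<Longrightarrow> x ^ n \<in> A_FA"
  by (induction n) (auto intro: A_one A_mult)

definition FL :: "nat list \<Rightarrow> (nat \<Rightarrow>\<^sub>0 nat) \<Rightarrow> FA" where
  "FL L m = foldr (\<lambda>k acc. T (2 * (k + 1)) Pos Pos ^ lk m k * acc) L 1"

lemma tt_A: "T (2 * (k + 1)) Pos Pos \<in> A_FA" by (rule A_gen) simp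
lemma tt_A': "T (Suc (Suc (2 * k))) Pos Pos \<in> A_FA" using tt_A[of k] by simp

lemma FL_A: "FL L m \<in> A_FA"
  by (induction L) (auto simp: FL_def intro: A_one A_mult A_power tt_A tt_A')

lemma FL_filter: "FL (filter (\<lambda>k. k \<in> Poly_Mapping.keys m) L) m = FL L m"
  by (induction L) (auto simp: FL_def in_keys_iff)

lemma eval_mono_FL: "Poly_Mapping.degree m \<le> N \<Longrightarrow> eval_mono m = FL [0..<N] m"
proof -
  assume N: "Poly_Mapping.degree m \<le> N"
  have "[0..<N] = [0..<Poly_Mapping.degree m] @ [Poly_Mapping.degree m..<N]" using N upt_add_eq_append[of 0 "Poly_Mapping.degree m" "N - Poly_Mapping.degree m"] by simp
  then have "filter (\<lambda>k. k \<in> Poly_Mapping.keys m) [0..<N] = filter (\<lambda>k. k \<in> Poly_Mapping.keys m) [0..<Poly_Mapping.degree m]"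
    by (auto dest: in_keys_less_degree intro!: filter_False)
  then have "FL [0..<N] m = FL (filter (\<lambda>k. k \<in> Poly_Mapping.keys m) [0..<Poly_Mapping.degree m]) m"
    by (metis FL_filter)
  moreover have "eval_mono m = FL (filter (\<lambda>k. k \<in> Poly_Mapping.keys m) [0..<Poly_Mapping.degree m]) m"
    by (simp only: eval_mono_def FL_def sorted_list_of_set_keys)
  ultimately show ?thesis by simp
qed

lemma FL_mult: "FL L (m + n) - FL L m * FL L n \<in> J_R"
proof (induction L)
  case Nil then show ?case by (simp add: FL_def JR_zero)
next
  case (Cons k L)
  let ?t = "T (2 * (k + 1)) Pos Pos"
  let ?a = "?t ^ lk m k" and ?b = "?t ^ lk n k"
  have e: "FL (k # L) (m + n) - FL (k # L) m * FL (k # L) n =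
     ?a * ?b * (FL L (m + n) - FL L m * FL L n) + ?a * (?b * FL L m - FL L m * ?b) * FL L n"
    by (simp add: FL_def lookup_add power_add algebra_simps)
  have c: "commJ ?b (FL L m)" by (rule commJ_A) (auto intro: A_power tt_A tt_A' FL_A)
  show ?case unfolding e using Cons.IH c unfolding commJ_def
    by (intro JR_add JR_lmult JR_rmult)
qed

lemma eval_mono_mult: "eval_mono (m + n) - eval_mono m * eval_mono n \<in> J_R"
proof -
  let ?N = "Poly_Mapping.degree m + Poly_Mapping.degree n + Poly_Mapping.degree (m + n)"
  have "eval_mono (m + n) = FL [0..<?N] (m + n)" "eval_mono m = FL [0..<?N] m" "eval_mono n = FL [0..<?N] n"
    by (rule eval_mono_FL; simp)+
  then show ?thesis using FL_mult[of "[0..<?N]" m n] by simp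
qed


lemma eval_poly_superset:
  assumes "finite K" "Poly_Mapping.keys p \<subseteq> K"
  shows "eval_poly p = (\<Sum>m\<in>K. scal (lk p m) * eval_mono m)"
  unfolding eval_poly_def
  by (rule sum.mono_neutral_left) (use assms in \<open>auto simp: in_keys_iff scal_zero\<close>)

lemma eval_poly_add: "eval_poly (p + q) = eval_poly p + eval_poly q"
proof -
  let ?K = "Poly_Mapping.keys p \<union> Poly_Mapping.keys q"
  have k: "Poly_Mapping.keys (p+q) \<subseteq> ?K" by (rule keys_add)
  show ?thesis
    by (simp add: eval_poly_superset[OF _ k] eval_poly_superset[of ?K p] eval_poly_superset[of ?K q]
        lookup_add scal_add distrib_right sum.distrib)
qed

lemma eval_poly_zero: "eval_poly 0 = 0" by (simp add: eval_poly_def)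

lemma eval_poly_sum: "eval_poly (sum f A) = (\<Sum>a\<in>A. eval_poly (f a))"
  by (induction A rule: infinite_finite_induct) (auto simp: eval_poly_zero eval_poly_add)

lemma eval_poly_single: "eval_poly (Poly_Mapping.single m c) = scal c * eval_mono m"
  by (simp add: eval_poly_superset[of "{m}"])

lemma eval_poly_mult: "eval_poly (p * q) - eval_poly p * eval_poly q \<in> J_R"
proof -
  have "p * q = (\<Sum>v\<in>Poly_Mapping.keys p. Poly_Mapping.single v (lk p v)) *
                (\<Sum>w\<in>Poly_Mapping.keys q. Poly_Mapping.single w (lk q w))"
    using pm_sum_single[of p] pm_sum_single[of q] by simp
  also have "\<dots> = (\<Sum>v\<in>Poly_Mapping.keys p. \<Sum>w\<in>Poly_Mapping.keys q.
       Poly_Mapping.single (v + w) (lk p v * lk q w))"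
    by (simp add: sum_distrib_left sum_distrib_right mult_single) (rule sum.swap)
  finally have e1: "eval_poly (p * q) = (\<Sum>v\<in>Poly_Mapping.keys p. \<Sum>w\<in>Poly_Mapping.keys q.
       scal (lk p v * lk q w) * eval_mono (v + w))"
    by (simp add: eval_poly_sum eval_poly_single)
  have "eval_poly p * eval_poly q = (\<Sum>v\<in>Poly_Mapping.keys p. \<Sum>w\<in>Poly_Mapping.keys q.
       (scal (lk p v) * eval_mono v) * (scal (lk q w) * eval_mono w))"
    by (simp add: eval_poly_def sum_distrib_left sum_distrib_right) (rule sum.swap)
  also have "\<dots> = (\<Sum>v\<in>Poly_Mapping.keys p. \<Sum>w\<in>Poly_Mapping.keys q.
       scal (lk p v * lk q w) * (eval_mono v * eval_mono w))"
  proof (intro sum.cong refl)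
    fix v w
    have "eval_mono v * scal (lk q w) = scal (lk q w) * eval_mono v" by (rule scal_central[symmetric])
    then show "(scal (lk p v) * eval_mono v) * (scal (lk q w) * eval_mono w) =
       scal (lk p v * lk q w) * (eval_mono v * eval_mono w)"
      by (simp add: scal_mult[symmetric] mult.assoc) (simp add: mult.assoc[symmetric])
  qed
  finally have e2: "eval_poly p * eval_poly q = \<dots>" .
  have "eval_poly (p * q) - eval_poly p * eval_poly q = (\<Sum>v\<in>Poly_Mapping.keys p. \<Sum>w\<in>Poly_Mapping.keys q.
       scal (lk p v * lk q w) * (eval_mono (v + w) - eval_mono v * eval_mono w))"
    unfolding e1 e2 by (simp add: sum_subtractf right_diff_distrib)
  also have "\<dots> \<in> J_R"
    by (intro JR_sum JR_lmult eval_mono_mult)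
  finally show ?thesis .
qed

lemma eval_mono_zero: "eval_mono 0 = 1" by (simp add: eval_mono_def)

lemma eval_mono_single: "eval_mono (Poly_Mapping.single k 1) = T (2 * (k + 1)) Pos Pos"
  by (simp add: eval_mono_def)

theorem claim4: "a \<in> A_FA \<Longrightarrow> \<exists>p. a - eval_poly p \<in> J_R"
  unfolding A_FA_def
proof (induction a rule: subalg_gen.induct)
  case (gen x)
  then obtain k where k: "k > 0" "x = T (2 * k) Pos Pos" by blast
  have "eval_poly (Poly_Mapping.single (Poly_Mapping.single (k - 1) 1) 1) = T (2 * (k - 1 + 1)) Pos Pos"
    by (simp only: eval_poly_single eval_mono_single scal_one mult_1)
  also have "\<dots> = x" using k by simp
  finally show ?case using JR_zero by (intro exI[of _ "Poly_Mapping.single (Poly_Mapping.single (k - 1) 1) 1"]) simp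
next
  case (scal c)
  have "eval_poly (Poly_Mapping.single 0 c) = scal c"
    by (simp add: eval_poly_single eval_mono_zero)
  then show ?case using JR_zero by (intro exI[of _ "Poly_Mapping.single 0 c"]) simp
next
  case (add x y)
  then obtain p q where "x - eval_poly p \<in> J_R" "y - eval_poly q \<in> J_R" by blast
  then have "(x - eval_poly p) + (y - eval_poly q) \<in> J_R" by (rule JR_add)
  then show ?case by (intro exI[of _ "p + q"]) (simp add: eval_poly_add algebra_simps)
next
  case (mult x y)
  then obtain p q where h: "x - eval_poly p \<in> J_R" "y - eval_poly q \<in> J_R" by blast
  have "x * y - eval_poly (p * q) = (x - eval_poly p) * y + eval_poly p * (y - eval_poly q)
      - (eval_poly (p * q) - eval_poly p * eval_poly q)"
    by (simp add: algebra_simps)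
  also have "\<dots> \<in> J_R"
    by (rule JR_diff[OF JR_add[OF JR_rmult[OF h(1)] JR_lmult[OF h(2)]] eval_poly_mult])
  finally show ?case by blast
qed




theorem claim2: "a \<in> A_FA \<Longrightarrow> a \<in> J_odd \<Longrightarrow> a \<in> J_R"
proof -
  assume aA: "a \<in> A_FA" and aJ: "a \<in> J_odd"
  obtain p where p: "a - eval_poly p \<in> J_R" using claim4[OF aA] by blast
  have "phiH (a - eval_poly p) = 0" by (rule phiH_J_odd[OF J_R_sub[OF p]])
  moreover have "phiH a = 0" by (rule phiH_J_odd[OF aJ])
  ultimately have "p = 0" by (simp add: phiH_diff phiH_eval_poly)
  then show "a \<in> J_R" using p by (simp add: eval_poly_zero)
qed

lemma JO_add: "x \<in> J_odd \<Longrightarrow> y \<in> J_odd \<Longrightarrow> x + y \<in> J_odd" unfolding J_odd_def by (rule ideal_gen.add)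
lemma JO_diff: "x \<in> J_odd \<Longrightarrow> y \<in> J_odd \<Longrightarrow> x - y \<in> J_odd" unfolding J_odd_def by (rule ig_diff)
lemma JO_lmult: "x \<in> J_odd \<Longrightarrow> a * x \<in> J_odd" unfolding J_odd_def by (rule ig_lmult)
lemma JO_rmult: "x \<in> J_odd \<Longrightarrow> x * a \<in> J_odd" unfolding J_odd_def by (rule ig_rmult)
lemma JO_uminus: "x \<in> J_odd \<Longrightarrow> - x \<in> J_odd" unfolding J_odd_def by (rule ig_uminus)
lemma JO_zero: "0 \<in> J_odd" unfolding J_odd_def by (rule ideal_gen.zero)

lemma T_zero: "T 0 i j = (if i = j then 1 else 0)" by (simp add: T_def)

lemma T_offdiag: "i \<noteq> j \<Longrightarrow> T m i j \<in> J_odd"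
proof (cases m)
  case 0
  assume "i \<noteq> j" then show ?thesis using 0 by (simp add: T_zero JO_zero)
next
  case (Suc n)
  assume ij: "i \<noteq> j"
  have "odd_FA (T m i j)"
    using ij Suc by (cases i; cases j) (auto simp: T_def odd_FA_def word_par_def)
  then show ?thesis unfolding J_odd_def by (intro ideal_gen.gen) blast
qed

lemma rel1_PNNP: "rel1 Pos Neg Neg Pos (int r) (-1) =
   - (T r Pos Neg * T 1 Neg Pos + T 1 Neg Pos * T r Pos Neg) - (T r Neg Neg - T r Pos Pos)"
  by (simp add: rel1_def scomm_def Tz_def T_zero nat_add_distrib)

lemma t_odd: "odd r \<Longrightarrow> T r Pos Pos \<in> J_odd"
proof -
  assume r: "odd r"
  have o1: "T 1 Neg Pos \<in> J_odd" by (rule T_offdiag) simp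
  have R1: "rel1 Pos Neg Neg Pos (int r) (-1) \<in> J_odd" by (rule J_R_sub[OF rel1_in])
  have R2: "rel2 r Pos Pos \<in> J_odd" by (rule J_R_sub[OF rel2_in])
  have S: "T r Pos Neg * T 1 Neg Pos + T 1 Neg Pos * T r Pos Neg \<in> J_odd"
    using o1 by (intro JO_add JO_lmult JO_rmult)
  have e: "T r Pos Pos + T r Pos Pos =
     (rel1 Pos Neg Neg Pos (int r) (-1) + (T r Pos Neg * T 1 Neg Pos + T 1 Neg Pos * T r Pos Neg)) - rel2 r Pos Pos"
    using r by (simp add: rel1_PNNP rel2_def)
  have "T r Pos Pos + T r Pos Pos \<in> J_odd"
    unfolding e by (rule JO_diff[OF JO_add[OF R1 S] R2])
  then show ?thesis unfolding J_odd_def by (rule ig_double)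
qed

definition approx :: "FA \<Rightarrow> bool" where "approx x \<longleftrightarrow> (\<exists>a\<in>A_FA. x - a \<in> J_odd)"

lemma approx_add: "approx x \<Longrightarrow> approx y \<Longrightarrow> approx (x + y)"
  unfolding approx_def
proof (elim bexE)
  fix a b assume "a \<in> A_FA" "x - a \<in> J_odd" "b \<in> A_FA" "y - b \<in> J_odd"
  have eq: "x + y - (a + b) = (x - a) + (y - b)" by (simp add: algebra_simps)
  have "x + y - (a + b) \<in> J_odd" unfolding eq by (rule JO_add[OF \<open>x - a \<in> J_odd\<close> \<open>y - b \<in> J_odd\<close>])
  then show "\<exists>c\<in>A_FA. x + y - c \<in> J_odd" using A_add[OF \<open>a \<in> A_FA\<close> \<open>b \<in> A_FA\<close>] by blast
qed

lemma approx_mult: "approx x \<Longrightarrow> approx y \<Longrightarrow> approx (x * y)"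
  unfolding approx_def
proof (elim bexE)
  fix a b assume h: "a \<in> A_FA" "x - a \<in> J_odd" "b \<in> A_FA" "y - b \<in> J_odd"
  have "x * y - a * b = (x - a) * y + a * (y - b)" by (simp add: algebra_simps)
  also have "\<dots> \<in> J_odd" by (rule JO_add[OF JO_rmult[OF h(2)] JO_lmult[OF h(4)]])
  finally show "\<exists>c\<in>A_FA. x * y - c \<in> J_odd" using h by (intro bexI[of _ "a * b"] A_mult) auto
qed

lemma approx_A: "a \<in> A_FA \<Longrightarrow> approx a"
  unfolding approx_def using JO_zero by force

lemma approx_J: "x \<in> J_odd \<Longrightarrow> approx x"
  unfolding approx_def using A_zero by force

lemma approx_sum: "(\<And>i. i \<in> S \<Longrightarrow> approx (f i)) \<Longrightarrow> approx (sum f S)"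
proof (induction S rule: infinite_finite_induct)
  case (infinite A) then show ?case by (simp add: approx_J JO_zero)
next
  case empty then show ?case by (simp add: approx_J JO_zero)
next
  case (insert x F) then show ?case by (simp add: approx_add)
qed

lemma approx_tP: "approx (T m Pos Pos)"
proof (cases "even m")
  case True
  then obtain k where k: "m = 2 * k" by blast
  show ?thesis
  proof (cases "k = 0")
    case True then show ?thesis using k A_one by (auto simp: T_zero intro: approx_A)
  next
    case False then show ?thesis using k by (auto intro: approx_A A_gen)
  qed
next
  case False then show ?thesis by (intro approx_J t_odd)
qed

lemma approx_T: "approx (T m i j)"
proof (cases "i = j")
  case False then show ?thesis by (intro approx_J T_offdiag)
next
  case True
  show ?thesis
  proof (cases i)
    case Pos then show ?thesis using True approx_tP by simp
  next
    case Neg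
    obtain a where a: "a \<in> A_FA" "T m Pos Pos - a \<in> J_odd" using approx_tP unfolding approx_def by blast
    have m1: "(-1::FA) ^ m \<in> A_FA" using A_scal[of "-1"] by (intro A_power) (simp add: scal_def single_uminus)
    have "T m Neg Neg - (-1) ^ m * a = (-1) ^ m * (T m Pos Pos - a) - rel2 m Pos Pos"
      by (simp add: rel2_def algebra_simps)
    also have "\<dots> \<in> J_odd" by (rule JO_diff[OF JO_lmult[OF a(2)] J_R_sub[OF rel2_in]])
    finally show ?thesis using True Neg a m1 unfolding approx_def by (intro bexI[of _ "(-1) ^ m * a"] A_mult) auto
  qed
qed

lemma approx_word: "approx (Poly_Mapping.single (Word ls) c)"
proof (induction ls arbitrary: c)
  case Nil
  have "Poly_Mapping.single (Word []) c = scal c" by (simp add: scal_def zero_word_def)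
  then show ?case using approx_A[OF A_scal] by simp
next
  case (Cons l ls)
  obtain k i j where l: "l = (k, i, j)" by (cases l) auto
  have "Poly_Mapping.single (Word (l # ls)) c = T (Suc k) i j * Poly_Mapping.single (Word ls) c"
    by (simp add: l T_def mult_single plus_word_def)
  then show ?case using approx_mult[OF approx_T Cons.IH] by simp
qed

theorem claim1: "\<exists>a\<in>A_FA. x - a \<in> J_odd"
proof -
  have "approx (\<Sum>w\<in>Poly_Mapping.keys x. Poly_Mapping.single w (lk x w))"
  proof (rule approx_sum)
    fix w show "approx (Poly_Mapping.single w (lk x w))" by (cases w) (simp add: approx_word)
  qed
  then show ?thesis using pm_sum_single[of x] unfolding approx_def by simp
qed

lemma J2_sum: "(\<And>i. i \<in> S \<Longrightarrow> f i \<in> J2) \<Longrightarrow> sum f S \<in> J2"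
  by (induction S rule: infinite_finite_induct) (auto intro: J2.intros)

lemma sum_split_even_odd: "(\<Sum>s\<in>{0..2*k}. (f::nat \<Rightarrow> 'b::comm_monoid_add) s) = (\<Sum>a\<in>{0..k}. f (2*a)) + (\<Sum>a\<in>{0..<k}. f (2*a+1))"
proof (induction k)
  case 0 then show ?case by simp
next
  case (Suc k)
  have "{0..2 * Suc k} = insert (Suc (Suc (2*k))) (insert (Suc (2*k)) {0..2*k})" by auto
  then have "(\<Sum>s\<in>{0..2*Suc k}. f s) = f (Suc (Suc (2*k))) + (f (Suc (2*k)) + (\<Sum>s\<in>{0..2*k}. f s))"
    by simp
  then show ?case using Suc.IH by (simp add: add_ac)
qed

theorem claim6: "Delta_T (2 * k) Pos Pos
              - (\<Sum>a \<in> {0..k}. tens (T (2 * a) Pos Pos) (T (2 * (k - a)) Pos Pos)) \<in> J2"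
proof -
  define P where "P s = tens (T s Pos Pos) (T (2*k - s) Pos Pos)" for s
  define N where "N s = tens ((-1) ^ ((par Pos + par Neg) * (par Pos + par Neg)) * T s Pos Neg) (T (2*k - s) Neg Pos)" for s
  have D: "Delta_T (2 * k) Pos Pos = (\<Sum>s\<in>{0..2*k}. P s + N s)"
    unfolding Delta_T_def P_def N_def by (intro sum.cong refl) simp
  have PE: "(\<Sum>a \<in> {0..k}. tens (T (2 * a) Pos Pos) (T (2 * (k - a)) Pos Pos)) = (\<Sum>a\<in>{0..k}. P (2*a))"
    unfolding P_def by (intro sum.cong refl) (simp add: diff_mult_distrib2)
  have e: "Delta_T (2 * k) Pos Pos - (\<Sum>a \<in> {0..k}. tens (T (2 * a) Pos Pos) (T (2 * (k - a)) Pos Pos))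
     = (\<Sum>a\<in>{0..<k}. P (2*a+1)) + (\<Sum>s\<in>{0..2*k}. N s)"
    unfolding D PE sum.distrib sum_split_even_odd[of P k] by simp
  have "(\<Sum>a\<in>{0..<k}. P (2*a+1)) \<in> J2"
    by (rule J2_sum) (simp add: P_def J2.left t_odd)
  moreover have "(\<Sum>s\<in>{0..2*k}. N s) \<in> J2"
    by (rule J2_sum) (auto simp: N_def intro!: J2.left JO_lmult JO_uminus T_offdiag)
  ultimately show ?thesis unfolding e by (rule J2.add)
qed

theorem lemma5p12:
  shows
    "(\<forall>x. \<exists>a \<in> A_FA. x - a \<in> J_odd)
     \<and> (\<forall>a \<in> A_FA. a \<in> J_odd \<longrightarrow> a \<in> J_R)
     \<and> (\<forall>k l. T (2 * k) Pos Pos * T (2 * l) Pos Pos - T (2 * l) Pos Pos * T (2 * k) Pos Pos \<in> J_R)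
     \<and> (\<forall>a \<in> A_FA. \<exists>p. a - eval_poly p \<in> J_R)
     \<and> (\<forall>p. eval_poly p \<in> J_R \<longrightarrow> p = 0)
     \<and> (\<forall>k. Delta_T (2 * k) Pos Pos
              - (\<Sum>a \<in> {0..k}. tens (T (2 * a) Pos Pos) (T (2 * (k - a)) Pos Pos)) \<in> J2)"
  using claim1 claim2 comm_even claim4 claim5 claim6 by blast


end
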